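(* Let $\nu>0$, $C_0,C_1>0$, and let $f_i:[0,1]\to[0,1]$, $i\in\mathbb N$, be orientation-preserving $C^{2+\nu}$ diffeomorphisms with $f_i(0)=0$, $f_i(1)=1$, $|n_{f_i}(x)-n_{f_i}(y)|\le C_0|x-y|^\nu$ for all $x,y\in[0,1]$, and $\sup_{[0,1]}|n_{f_i}|\le C_1$, for all $i$. Then for every $C_2>0$ there exists $C_3>0$ such that the following holds: for every $n$ and every choice of intervals $[a_i,b_i]\subset[0,1]$, $1\le i\le n$, with $\delta_i=b_i-a_i>0$ and $\sum_{i=1}^n\delta_i\le C_2$, $$d_{C^2}\big(\tilde f_1^n,M_1^n\big)\le C_3\big(\max_{1\le j\le n}\delta_j\big)^\nu,$$ where $\tilde f_i=\mathcal Z_{[a_i,b_i]}(f_i)$, $M_i=M_{N_{\tilde f_i}}$, $\tilde f_1^n=\tilde f_n\circ\cdots\circ\tilde f_1$ and $M_1^n=M_n\circ\cdots\circ M_1$.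
   Context: For a $C^2$ orientation-preserving diffeomorphism $g$ of an interval, its nonlinearity is $n_g=D^2g/Dg$; for $g$ defined on $[0,1]$, $N_g=\int_0^1 n_g(x)\,dx$. Zoom: for an interval $H$ and a diffeomorphism $g$ on $H$, $\mathcal Z_H(g)=A_1\circ g\circ A_2:[0,1]\to[0,1]$, where $A_2$ is the orientation-preserving affine map sending $[0,1]$ onto $H$ and $A_1$ the orientation-preserving affine map sending $g(H)$ onto $[0,1]$. For $N\in\mathbb R$, $M_N(x)=\dfrac{xe^{-N/2}}{1+x(e^{-N/2}-1)}$ on $[0,1]$. $d_{C^2}(f,g)=\sum_{i=0}^2\sup_{x\in[0,1]}|D^if(x)-D^ig(x)|$. *)

theory Defs
  imports "HOL-Analysis.Analysis"
begin

definition Dw :: "(real \<Rightarrow> real) \<Rightarrow> real \<Rightarrow> real" where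
  "Dw g x = (THE d. (g has_real_derivative d) (at x within {0..1}))"

definition C2_diffeo01 :: "(real \<Rightarrow> real) \<Rightarrow> bool" where
  "C2_diffeo01 g \<longleftrightarrow>
     (\<forall>x\<in>{0..1}. (g has_real_derivative Dw g x) (at x within {0..1})
                 \<and> (Dw g has_real_derivative Dw (Dw g) x) (at x within {0..1})
                 \<and> Dw g x > 0)
     \<and> continuous_on {0..1} (Dw (Dw g))
     \<and> g ` {0..1} = {0..1}"

definition C2nu_diffeo01 :: "real \<Rightarrow> (real \<Rightarrow> real) \<Rightarrow> bool" where
  "C2nu_diffeo01 \<nu> g \<longleftrightarrow> C2_diffeo01 g \<and>
     (\<exists>K. \<forall>x\<in>{0..1}. \<forall>y\<in>{0..1}. \<bar>Dw (Dw g) x - Dw (Dw g) y\<bar> \<le> K * \<bar>x - y\<bar> powr \<nu>)"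

definition nonlin :: "(real \<Rightarrow> real) \<Rightarrow> real \<Rightarrow> real" where
  "nonlin g x = Dw (Dw g) x / Dw g x"

definition Nint :: "(real \<Rightarrow> real) \<Rightarrow> real" where
  "Nint g = integral {0..1} (nonlin g)"

text \<open>Zoom of g on [a,b]: A1 o g o A2.\<close>
definition zoom :: "real \<Rightarrow> real \<Rightarrow> (real \<Rightarrow> real) \<Rightarrow> real \<Rightarrow> real" where
  "zoom a b g x = (g (a + x * (b - a)) - g a) / (g b - g a)"

definition Mob :: "real \<Rightarrow> real \<Rightarrow> real" where
  "Mob N x = x * exp (- N / 2) / (1 + x * (exp (- N / 2) - 1))"

fun comp_upto :: "(nat \<Rightarrow> real \<Rightarrow> real) \<Rightarrow> nat \<Rightarrow> real \<Rightarrow> real" where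
  "comp_upto F 0 = id"
| "comp_upto F (Suc k) = F (Suc k) \<circ> comp_upto F k"

definition dC2 :: "(real \<Rightarrow> real) \<Rightarrow> (real \<Rightarrow> real) \<Rightarrow> real" where
  "dC2 f g = (\<Sum>i<3. SUP x\<in>{0..1}. \<bar>(Dw ^^ i) f x - (Dw ^^ i) g x\<bar>)"

end

theory Submission
  imports Defs
begin


definition c2 :: "(real \<Rightarrow> real) \<Rightarrow> bool" where
 "c2 g \<longleftrightarrow> (\<forall>x\<in>{0..1}. (g has_real_derivative Dw g x) (at x within {0..1})
     \<and> (Dw g has_real_derivative Dw (Dw g) x) (at x within {0..1}) \<and> Dw g x > 0)
     \<and> g 0 = 0 \<and> g 1 = 1"

lemma Dw_eq:
  assumes "(g has_real_derivative d) (at x within {0..1})" "x \<in> {0..1}"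
  shows "Dw g x = d"
proof -
  have u: "d' = d" if "(g has_real_derivative d') (at x within {0..1})" for d'
    using vector_derivative_unique_within_closed_interval[of 0 1 x g d' d] that assms
    by (simp add: has_real_derivative_iff_has_vector_derivative)
  show ?thesis unfolding Dw_def using assms(1) u by (rule the_equality)
qed

lemma deriv_transform:
  assumes "(f has_real_derivative d) (at x within {0..1})" "x \<in> {0..1}"
    "\<And>y. y \<in> {0..1} \<Longrightarrow> f y = g y"
  shows "(g has_real_derivative d) (at x within {0..1})"
  using has_field_derivative_transform_within[OF assms(1) zero_less_one assms(2)] assms(3) by blast

lemma c2D:
  assumes "c2 g" "x \<in> {0..1}"
  shows "(g has_real_derivative Dw g x) (at x within {0..1})"
    "(Dw g has_real_derivative Dw (Dw g) x) (at x within {0..1})" "Dw g x > 0"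
  using assms unfolding c2_def by auto

lemma c2_ends: "c2 g \<Longrightarrow> g 0 = 0" "c2 g \<Longrightarrow> g 1 = 1" unfolding c2_def by auto

lemma at_interior: "x \<in> {0<..<1} \<Longrightarrow> at x within {0..1::real} = at x"
  by (simp add: at_within_Icc_at)

lemma mvt01:
  assumes "\<And>x. x \<in> {0..1} \<Longrightarrow> (g has_real_derivative g' x) (at x within {0..1})"
    "u \<in> {0..1}" "v \<in> {0..1}" "u < v"
  shows "\<exists>z. u < z \<and> z < v \<and> g v - g u = (v - u) * g' z"
proof -
  have c: "continuous_on {u..v} g"
  proof -
    have "continuous_on {0..1} g"
      using assms(1) by (meson DERIV_continuous continuous_on_eq_continuous_within)
    then show ?thesis by (rule continuous_on_subset) (use assms(2,3) in auto)
  qed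
  have d: "(g has_real_derivative g' x) (at x)" if "u < x" "x < v" for x
    using assms(1)[of x] assms(2,3) that at_interior[of x] by auto
  obtain l z where "u < z" "z < v" "(g has_real_derivative l) (at z)" "g v - g u = (v - u) * l"
    using MVT[OF assms(4) c] d real_differentiable_def by blast
  moreover have "l = g' z" using d[of z] calculation DERIV_unique by blast
  ultimately show ?thesis by blast
qed

lemma c2_mono:
  assumes "c2 g" "u \<in> {0..1}" "v \<in> {0..1}" "u < v"
  shows "g u < g v"
proof -
  obtain z where "u < z" "z < v" "g v - g u = (v - u) * Dw g z"
    using mvt01[of g "Dw g" u v] assms c2D by blast
  moreover have "Dw g z > 0" using c2D(3)[OF assms(1), of z] calculation assms by auto
  ultimately show ?thesis by (smt (verit) mult_pos_pos)
qed

lemma c2_range: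
  assumes "c2 g" "x \<in> {0..1}" shows "g x \<in> {0..1}"
proof -
  have "g 0 \<le> g x" using c2_mono[OF assms(1), of 0 x] assms by (cases "x = 0") auto
  moreover have "g x \<le> g 1" using c2_mono[OF assms(1), of x 1] assms by (cases "x = 1") auto
  ultimately show ?thesis using c2_ends[OF assms(1)] by auto
qed

lemma c2_rolle:
  assumes "c2 u" "c2 v"
  shows "\<exists>z\<in>{0..1}. Dw u z = Dw v z"
proof -
  have "((\<lambda>x. u x - v x) has_real_derivative Dw u x - Dw v x) (at x within {0..1})"
    if "x \<in> {0..1}" for x using that assms by (auto intro!: derivative_intros c2D)
  then obtain z where "0 < z" "z < 1" "(u 1 - v 1) - (u 0 - v 0) = (1 - 0) * (Dw u z - Dw v z)"
    using mvt01[of "\<lambda>x. u x - v x" "\<lambda>x. Dw u x - Dw v x" 0 1] by auto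
  then show ?thesis using c2_ends[OF assms(1)] c2_ends[OF assms(2)] by (intro bexI[of _ z]) auto
qed


lemma c2_comp:
  assumes "c2 u" "c2 v"
  shows "c2 (u \<circ> v)"
    and "x \<in> {0..1} \<Longrightarrow> Dw (u \<circ> v) x = Dw u (v x) * Dw v x"
    and "x \<in> {0..1} \<Longrightarrow> Dw (Dw (u \<circ> v)) x = Dw (Dw u) (v x) * Dw v x * Dw v x + Dw u (v x) * Dw (Dw v) x"
proof -
  have sub: "v ` {0..1} \<subseteq> {0..1}" using c2_range[OF assms(2)] by auto
  have d1: "((u \<circ> v) has_real_derivative Dw u (v x) * Dw v x) (at x within {0..1})"
    if "x \<in> {0..1}" for x
    by (rule DERIV_image_chain[OF DERIV_subset[OF c2D(1)[OF assms(1) c2_range[OF assms(2) that]] sub]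
          c2D(1)[OF assms(2) that]])
  have e1: "Dw (u \<circ> v) x = Dw u (v x) * Dw v x" if "x \<in> {0..1}" for x
    using Dw_eq[OF d1[OF that] that] .
  have d2: "((\<lambda>y. Dw u (v y) * Dw v y) has_real_derivative
      Dw (Dw u) (v x) * Dw v x * Dw v x + Dw u (v x) * Dw (Dw v) x) (at x within {0..1})"
    if "x \<in> {0..1}" for x
  proof -
    have a: "((Dw u \<circ> v) has_real_derivative Dw (Dw u) (v x) * Dw v x) (at x within {0..1})"
      by (rule DERIV_image_chain[OF DERIV_subset[OF c2D(2)[OF assms(1) c2_range[OF assms(2) that]] sub]
          c2D(1)[OF assms(2) that]])
    have "((\<lambda>y. (Dw u \<circ> v) y * Dw v y) has_real_derivative
      Dw (Dw u) (v x) * Dw v x * Dw v x + Dw u (v x) * Dw (Dw v) x) (at x within {0..1})"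
      using DERIV_mult[OF a c2D(2)[OF assms(2) that]] by (simp add: algebra_simps)
    then show ?thesis by (simp add: o_def)
  qed
  have d2': "(Dw (u \<circ> v) has_real_derivative
      Dw (Dw u) (v x) * Dw v x * Dw v x + Dw u (v x) * Dw (Dw v) x) (at x within {0..1})"
    if "x \<in> {0..1}" for x
    by (rule deriv_transform[OF d2[OF that] that]) (simp add: e1)
  have e2: "Dw (Dw (u \<circ> v)) x = Dw (Dw u) (v x) * Dw v x * Dw v x + Dw u (v x) * Dw (Dw v) x"
    if "x \<in> {0..1}" for x using Dw_eq[OF d2'[OF that] that] .
  show "Dw (Dw (u \<circ> v)) x = Dw (Dw u) (v x) * Dw v x * Dw v x + Dw u (v x) * Dw (Dw v) x"
    if "x \<in> {0..1}" using e2 that .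
  show "Dw (u \<circ> v) x = Dw u (v x) * Dw v x" if "x \<in> {0..1}" using e1 that .
  show "c2 (u \<circ> v)" unfolding c2_def
  proof (intro conjI ballI)
    fix x :: real assume x: "x \<in> {0..1}"
    show "((u \<circ> v) has_real_derivative Dw (u \<circ> v) x) (at x within {0..1})" using d1[OF x] e1[OF x] by simp
    show "(Dw (u \<circ> v) has_real_derivative Dw (Dw (u \<circ> v)) x) (at x within {0..1})" using d2'[OF x] e2[OF x] by simp
    show "Dw (u \<circ> v) x > 0" using e1[OF x] c2D(3)[OF assms(1) c2_range[OF assms(2) x]] c2D(3)[OF assms(2) x] by simp
  qed (use c2_ends[OF assms(1)] c2_ends[OF assms(2)] in auto)
qed

lemma nonlin_comp:
  assumes "c2 u" "c2 v" "x \<in> {0..1}"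
  shows "nonlin (u \<circ> v) x = nonlin u (v x) * Dw v x + nonlin v x"
  using c2_comp(2)[OF assms] c2_comp(3)[OF assms] c2D(3)[OF assms(1) c2_range[OF assms(2,3)]] c2D(3)[OF assms(2,3)]
  unfolding nonlin_def by (simp add: field_simps)

lemma c2_id: "c2 id" and Dw_id: "x \<in> {0..1} \<Longrightarrow> Dw id x = 1" and DDw_id: "x \<in> {0..1} \<Longrightarrow> Dw (Dw id) x = 0"
proof -
  have e: "Dw id x = 1" if "x \<in> {0..1}" for x
    by (rule Dw_eq[OF _ that]) (simp add: DERIV_ident[THEN DERIV_subset] id_def)
  have d: "(Dw id has_real_derivative 0) (at x within {0..1})" if "x \<in> {0..1}" for x
    by (rule deriv_transform[of "\<lambda>_. 1", OF _ that]) (auto simp: e)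
  have e2: "Dw (Dw id) x = 0" if "x \<in> {0..1}" for x using Dw_eq[OF d[OF that] that] .
  show "Dw id x = 1" if "x \<in> {0..1}" using e that .
  show "Dw (Dw id) x = 0" if "x \<in> {0..1}" using e2 that .
  show "c2 id" unfolding c2_def
    using e e2 d by (auto simp: id_def DERIV_ident[THEN DERIV_subset])
qed

lemma log_diff_bound:
  assumes "c2 u" "c2 v" "\<And>x. x \<in> {0..1} \<Longrightarrow> \<bar>nonlin u x - nonlin v x\<bar> \<le> \<eta>" "x \<in> {0..1}"
  shows "\<bar>ln (Dw u x) - ln (Dw v x)\<bar> \<le> \<eta>"
proof -
  obtain z where z: "z \<in> {0..1}" "Dw u z = Dw v z" using c2_rolle[OF assms(1,2)] by blast
  have d: "((\<lambda>y. ln (Dw u y) - ln (Dw v y)) has_real_derivative nonlin u y - nonlin v y) (at y within {0..1})"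
    if "y \<in> {0..1}" for y
  proof -
    have p: "Dw u y > 0" "Dw v y > 0" using c2D(3) assms(1,2) that by auto
    show ?thesis unfolding nonlin_def
      by (rule derivative_eq_intros c2D[OF assms(1) that] c2D[OF assms(2) that] | use p in simp)+
  qed
  have "norm ((ln (Dw u x) - ln (Dw v x)) - (ln (Dw u z) - ln (Dw v z))) \<le> \<eta> * norm (x - z)"
    by (rule field_differentiable_bound[OF convex_real_interval(5) d _ assms(4) z(1)])
      (use assms(3) in auto)
  moreover have "norm (x - z) \<le> 1" using assms(4) z(1) by auto
  moreover have "\<eta> \<ge> 0" using assms(3)[of 0] by auto
  ultimately show ?thesis using z(2) by simp (smt (verit) mult_left_le)
qed


lemma nonlin_id: "x \<in> {0..1} \<Longrightarrow> nonlin id x = 0"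
  by (simp add: nonlin_def DDw_id)

lemma D_bounds:
  assumes "c2 h" "\<And>x. x \<in> {0..1} \<Longrightarrow> \<bar>nonlin h x\<bar> \<le> S" "x \<in> {0..1}"
  shows "exp (-S) \<le> Dw h x" "Dw h x \<le> exp S"
proof -
  have "\<bar>ln (Dw h x) - ln (Dw id x)\<bar> \<le> S"
    by (rule log_diff_bound[OF assms(1) c2_id _ assms(3)]) (simp add: nonlin_id assms(2))
  then have l: "\<bar>ln (Dw h x)\<bar> \<le> S" using Dw_id[OF assms(3)] by simp
  have p: "Dw h x > 0" using c2D(3)[OF assms(1,3)] .
  have "exp (-S) \<le> exp (ln (Dw h x))" using l by simp
  then show "exp (-S) \<le> Dw h x" using p by simp
  have "exp (ln (Dw h x)) \<le> exp S" using l by simp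
  then show "Dw h x \<le> exp S" using p by simp
qed

lemma exp_E1: "\<bar>exp (y::real) - 1\<bar> \<le> \<bar>y\<bar> * exp \<bar>y\<bar>"
proof -
  have "norm (exp y - exp 0) \<le> exp \<bar>y\<bar> * norm (y - 0)"
    by (rule field_differentiable_bound[of "{-\<bar>y\<bar>..\<bar>y\<bar>}" exp exp])
      (auto intro!: DERIV_exp[THEN DERIV_subset])
  then show ?thesis by (simp add: mult.commute)
qed

lemma exp_E2: "\<bar>exp (y::real) - 1 - y\<bar> \<le> y\<^sup>2 * exp \<bar>y\<bar>"
proof -
  have b: "\<bar>exp z - 1\<bar> \<le> \<bar>y\<bar> * exp \<bar>y\<bar>" if "z \<in> {-\<bar>y\<bar>..\<bar>y\<bar>}" for z
  proof -
    have "\<bar>exp z - 1\<bar> \<le> \<bar>z\<bar> * exp \<bar>z\<bar>" by (rule exp_E1)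
    also have "\<dots> \<le> \<bar>y\<bar> * exp \<bar>y\<bar>" using that by (intro mult_mono) auto
    finally show ?thesis .
  qed
  have "norm ((exp y - 1 - y) - (exp 0 - 1 - 0)) \<le> (\<bar>y\<bar> * exp \<bar>y\<bar>) * norm (y - 0)"
    by (rule field_differentiable_bound[of "{-\<bar>y\<bar>..\<bar>y\<bar>}" "\<lambda>z. exp z - 1 - z" "\<lambda>z. exp z - 1"])
      (auto intro!: derivative_eq_intros b)
  then show ?thesis by (simp add: power2_eq_square algebra_simps abs_mult)
qed

lemma c2_close:
  assumes "c2 u" "c2 v" "\<And>x. x \<in> {0..1} \<Longrightarrow> \<bar>nonlin v x\<bar> \<le> S"
    "\<And>x. x \<in> {0..1} \<Longrightarrow> \<bar>nonlin u x - nonlin v x\<bar> \<le> \<eta>" "\<eta> \<le> H"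
  shows "\<And>x. x \<in> {0..1} \<Longrightarrow> \<bar>Dw u x - Dw v x\<bar> \<le> exp S * exp H * \<eta>"
    and "\<And>x. x \<in> {0..1} \<Longrightarrow> \<bar>u x - v x\<bar> \<le> exp S * exp H * \<eta>"
proof -
  have eta: "\<eta> \<ge> 0" using assms(4)[of 0] by auto
  have D: "\<bar>Dw u x - Dw v x\<bar> \<le> exp S * exp H * \<eta>" if x: "x \<in> {0..1}" for x
  proof -
    define p where "p = ln (Dw u x) - ln (Dw v x)"
    have pb: "\<bar>p\<bar> \<le> \<eta>" unfolding p_def by (rule log_diff_bound[OF assms(1,2) assms(4) x])
    have pu: "Dw u x > 0" "Dw v x > 0" using c2D(3) assms(1,2) x by auto
    have "Dw u x = Dw v x * exp p" unfolding p_def using pu by (simp add: exp_diff)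
    then have "Dw u x - Dw v x = Dw v x * (exp p - 1)" by (simp add: algebra_simps)
    then have "\<bar>Dw u x - Dw v x\<bar> = Dw v x * \<bar>exp p - 1\<bar>" using pu by (simp add: abs_mult)
    also have "\<dots> \<le> exp S * (\<eta> * exp H)"
    proof (rule mult_mono)
      show "Dw v x \<le> exp S" by (rule D_bounds(2)[OF assms(2,3) x])
      have "\<bar>exp p - 1\<bar> \<le> \<bar>p\<bar> * exp \<bar>p\<bar>" by (rule exp_E1)
      also have "\<dots> \<le> \<eta> * exp H" using pb assms(5) by (intro mult_mono) auto
      finally show "\<bar>exp p - 1\<bar> \<le> \<eta> * exp H" .
    qed (use eta in auto)
    finally show ?thesis by (simp add: algebra_simps)
  qed
  show "\<bar>Dw u x - Dw v x\<bar> \<le> exp S * exp H * \<eta>" if "x \<in> {0..1}" for x using D that .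
  show "\<bar>u x - v x\<bar> \<le> exp S * exp H * \<eta>" if x: "x \<in> {0..1}" for x
  proof -
    have "norm ((u x - v x) - (u 0 - v 0)) \<le> (exp S * exp H * \<eta>) * norm (x - 0)"
      by (rule field_differentiable_bound[OF convex_real_interval(5), where f="\<lambda>y. u y - v y" and f'="\<lambda>y. Dw u y - Dw v y"])
        (use x D in \<open>auto intro!: derivative_intros c2D assms(1,2)\<close>)
    moreover have "exp S * exp H * \<eta> * norm (x - 0) \<le> exp S * exp H * \<eta>"
      using x eta by (intro mult_left_le) auto
    moreover have "norm ((u x - v x) - (u 0 - v 0)) = \<bar>u x - v x\<bar>"
      using c2_ends[OF assms(1)] c2_ends[OF assms(2)] by simp
    ultimately show ?thesis by linarith
  qed
qed



lemma sum_le_n: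
  fixes g :: "nat \<Rightarrow> real"
  assumes "k \<le> n" "\<And>i. i \<in> {1..n} \<Longrightarrow> 0 \<le> g i"
  shows "(\<Sum>i=1..k. g i) \<le> (\<Sum>i=1..n. g i)"
  by (rule sum_mono2) (use assms in auto)

lemma seq_bounds:
  assumes cu: "\<And>i. i \<in> {1..n} \<Longrightarrow> c2 (u i)"
    and bu: "\<And>i x. i \<in> {1..n} \<Longrightarrow> x \<in> {0..1} \<Longrightarrow> \<bar>nonlin (u i) x\<bar> \<le> \<gamma> i"
  shows "k \<le> n \<Longrightarrow> c2 (comp_upto u k) \<and> (\<forall>x\<in>{0..1}. Dw (comp_upto u k) x \<le> exp (\<Sum>i=1..k. \<gamma> i)
      \<and> \<bar>nonlin (comp_upto u k) x\<bar> \<le> exp (\<Sum>i=1..n. \<gamma> i) * (\<Sum>i=1..k. \<gamma> i))"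
proof (induction k)
  case 0
  then show ?case using c2_id[unfolded id_def] Dw_id[unfolded id_def] nonlin_id[unfolded id_def] by simp
next
  case (Suc k)
  have g0: "\<gamma> i \<ge> 0" if "i \<in> {1..n}" for i using bu[OF that, of 0] by auto
  have sk: "Suc k \<in> {1..n}" using Suc.prems by auto
  define G where "G = comp_upto u k"
  have IH: "c2 G" "\<And>x. x \<in> {0..1} \<Longrightarrow> Dw G x \<le> exp (\<Sum>i=1..k. \<gamma> i)"
     "\<And>x. x \<in> {0..1} \<Longrightarrow> \<bar>nonlin G x\<bar> \<le> exp (\<Sum>i=1..n. \<gamma> i) * (\<Sum>i=1..k. \<gamma> i)"
    using Suc G_def by auto
  have eq: "comp_upto u (Suc k) = u (Suc k) \<circ> G" by (simp add: G_def)
  have c: "c2 (comp_upto u (Suc k))" unfolding eq by (rule c2_comp(1)[OF cu[OF sk] IH(1)])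
  have ss: "(\<Sum>i=1..Suc k. \<gamma> i) = (\<Sum>i=1..k. \<gamma> i) + \<gamma> (Suc k)" by simp
  have sle: "(\<Sum>i=1..k. \<gamma> i) \<le> (\<Sum>i=1..n. \<gamma> i)" using Suc.prems g0 by (intro sum_le_n) auto
  have sle0: "(\<Sum>i=1..k. \<gamma> i) \<ge> 0" using Suc.prems g0 by (intro sum_nonneg) auto
  have sle1: "(\<Sum>i=1..Suc k. \<gamma> i) \<le> (\<Sum>i=1..n. \<gamma> i)" using Suc.prems g0 by (intro sum_le_n) auto
  show ?case
  proof (intro conjI ballI c)
    fix x :: real assume x: "x \<in> {0..1}"
    have Gx: "G x \<in> {0..1}" by (rule c2_range[OF IH(1) x])
    have Dp: "Dw G x > 0" using c2D(3)[OF IH(1) x] .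
    have Du: "Dw (u (Suc k)) (G x) \<le> exp (\<gamma> (Suc k))"
      by (rule D_bounds(2)[OF cu[OF sk] bu[OF sk] Gx])
    have Dup: "Dw (u (Suc k)) (G x) > 0" using c2D(3)[OF cu[OF sk] Gx] .
    have "Dw (comp_upto u (Suc k)) x = Dw (u (Suc k)) (G x) * Dw G x"
      unfolding eq by (rule c2_comp(2)[OF cu[OF sk] IH(1) x])
    also have "\<dots> \<le> exp (\<gamma> (Suc k)) * exp (\<Sum>i=1..k. \<gamma> i)"
      using Du IH(2)[OF x] Dp Dup by (intro mult_mono) auto
    finally show "Dw (comp_upto u (Suc k)) x \<le> exp (\<Sum>i=1..Suc k. \<gamma> i)"
      by (simp add: exp_add[symmetric] add.commute)
    have "\<bar>nonlin (comp_upto u (Suc k)) x\<bar> = \<bar>nonlin (u (Suc k)) (G x) * Dw G x + nonlin G x\<bar>"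
      unfolding eq by (simp add: nonlin_comp[OF cu[OF sk] IH(1) x])
    also have "\<dots> \<le> \<gamma> (Suc k) * exp (\<Sum>i=1..n. \<gamma> i) + exp (\<Sum>i=1..n. \<gamma> i) * (\<Sum>i=1..k. \<gamma> i)"
    proof -
      have "\<bar>nonlin (u (Suc k)) (G x) * Dw G x\<bar> \<le> \<gamma> (Suc k) * exp (\<Sum>i=1..n. \<gamma> i)"
      proof -
        have "\<bar>nonlin (u (Suc k)) (G x) * Dw G x\<bar> = \<bar>nonlin (u (Suc k)) (G x)\<bar> * Dw G x"
          using Dp by (simp add: abs_mult)
        also have "\<dots> \<le> \<gamma> (Suc k) * exp (\<Sum>i=1..n. \<gamma> i)"
          using bu[OF sk Gx] IH(2)[OF x] sle Dp g0[OF sk]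
          by (intro mult_mono) (auto intro: order_trans)
        finally show ?thesis .
      qed
      then show ?thesis using IH(3)[OF x] by linarith
    qed
    also have "\<dots> = exp (\<Sum>i=1..n. \<gamma> i) * (\<Sum>i=1..Suc k. \<gamma> i)" by (simp add: algebra_simps)
    finally show "\<bar>nonlin (comp_upto u (Suc k)) x\<bar> \<le> exp (\<Sum>i=1..n. \<gamma> i) * (\<Sum>i=1..Suc k. \<gamma> i)" .
  qed
qed


lemma dC2_eq: "dC2 f g = (SUP x\<in>{0..1}. \<bar>f x - g x\<bar>) + (SUP x\<in>{0..1}. \<bar>Dw f x - Dw g x\<bar>)
   + (SUP x\<in>{0..1}. \<bar>Dw (Dw f) x - Dw (Dw g) x\<bar>)"
  by (simp add: dC2_def numeral_3_eq_3 lessThan_Suc)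

lemma SUP01_le: "(\<And>x. x \<in> {0..1::real} \<Longrightarrow> h x \<le> c) \<Longrightarrow> (SUP x\<in>{0..1}. h x) \<le> (c::real)"
  by (rule cSUP_least) auto

lemma dC2_le:
  assumes "\<And>x. x \<in> {0..1} \<Longrightarrow> \<bar>f x - g x\<bar> \<le> c0"
    "\<And>x. x \<in> {0..1} \<Longrightarrow> \<bar>Dw f x - Dw g x\<bar> \<le> c1"
    "\<And>x. x \<in> {0..1} \<Longrightarrow> \<bar>Dw (Dw f) x - Dw (Dw g) x\<bar> \<le> c2'"
  shows "dC2 f g \<le> c0 + c1 + c2'"
  unfolding dC2_eq using SUP01_le[where h="\<lambda>x. \<bar>f x - g x\<bar>", OF assms(1)]
    SUP01_le[where h="\<lambda>x. \<bar>Dw f x - Dw g x\<bar>", OF assms(2)]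
    SUP01_le[where h="\<lambda>x. \<bar>Dw (Dw f) x - Dw (Dw g) x\<bar>", OF assms(3)] by linarith


lemma core:
  fixes u v :: "nat \<Rightarrow> real \<Rightarrow> real" and N \<alpha> \<beta> :: "nat \<Rightarrow> real"
  assumes cu: "\<And>i. i \<in> {1..n} \<Longrightarrow> c2 (u i)"
    and cv: "\<And>i. i \<in> {1..n} \<Longrightarrow> c2 (v i)"
    and au: "\<And>i x. i \<in> {1..n} \<Longrightarrow> x \<in> {0..1} \<Longrightarrow> \<bar>nonlin (u i) x - N i\<bar> \<le> \<alpha> i"
    and av: "\<And>i x. i \<in> {1..n} \<Longrightarrow> x \<in> {0..1} \<Longrightarrow> \<bar>nonlin (v i) x - N i\<bar> \<le> \<alpha> i"
    and bN: "\<And>i. i \<in> {1..n} \<Longrightarrow> \<bar>N i\<bar> \<le> \<beta> i"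
    and sA: "(\<Sum>i=1..n. \<alpha> i) \<le> A" and sB: "(\<Sum>i=1..n. \<beta> i) \<le> B"
  defines "P \<equiv> A + B"
  defines "E \<equiv> exp P"
  defines "Kd \<equiv> exp (E * P) * exp (2 * E * P)"
  shows "dC2 (comp_upto u n) (comp_upto v n) \<le>
     ((Kd + Kd + (E + E * P * Kd)) * (exp (Kd * B) * (2 * E))) * (\<Sum>i=1..n. \<alpha> i)"
proof -
  define \<gamma> where "\<gamma> i = \<alpha> i + \<beta> i" for i
  have a0: "\<alpha> i \<ge> 0" if "i \<in> {1..n}" for i using au[OF that, of 0] by auto
  have b0: "\<beta> i \<ge> 0" if "i \<in> {1..n}" for i using bN[OF that] by auto
  have gu: "\<bar>nonlin (u i) x\<bar> \<le> \<gamma> i" if "i \<in> {1..n}" "x \<in> {0..1}" for i x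
    using au[OF that] bN[OF that(1)] unfolding \<gamma>_def by linarith
  have gv: "\<bar>nonlin (v i) x\<bar> \<le> \<gamma> i" if "i \<in> {1..n}" "x \<in> {0..1}" for i x
    using av[OF that] bN[OF that(1)] unfolding \<gamma>_def by linarith
  have sg: "(\<Sum>i=1..n. \<gamma> i) \<le> P" unfolding \<gamma>_def P_def sum.distrib using sA sB by linarith
  have sg0: "(\<Sum>i=1..k. \<gamma> i) \<ge> 0" if "k \<le> n" for k
    using that a0 b0 unfolding \<gamma>_def by (intro sum_nonneg) (auto intro: add_nonneg_nonneg)
  have P0: "P \<ge> 0" using sg sg0[of n] by auto
  have E1: "E \<ge> 1" unfolding E_def using P0 by simp
  have Kd1: "Kd \<ge> 1" unfolding Kd_def using P0 E1 by (simp add: one_le_exp_iff mult_ge1_I)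
  have SU: "c2 (comp_upto u k) \<and> (\<forall>x\<in>{0..1}. Dw (comp_upto u k) x \<le> E \<and> \<bar>nonlin (comp_upto u k) x\<bar> \<le> E * P)"
    if "k \<le> n" for k
  proof -
    have h: "c2 (comp_upto u k) \<and> (\<forall>x\<in>{0..1}. Dw (comp_upto u k) x \<le> exp (\<Sum>i=1..k. \<gamma> i)
      \<and> \<bar>nonlin (comp_upto u k) x\<bar> \<le> exp (\<Sum>i=1..n. \<gamma> i) * (\<Sum>i=1..k. \<gamma> i))"
      by (rule seq_bounds[OF cu gu that])
    have k1: "(\<Sum>i=1..k. \<gamma> i) \<le> P" using sum_le_n[OF that, of \<gamma>] a0 b0 sg unfolding \<gamma>_def by force
    have "exp (\<Sum>i=1..k. \<gamma> i) \<le> E" unfolding E_def using k1 by simp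
    moreover have "exp (\<Sum>i=1..n. \<gamma> i) * (\<Sum>i=1..k. \<gamma> i) \<le> E * P"
      unfolding E_def using k1 sg sg0[OF that] by (intro mult_mono) auto
    ultimately show ?thesis using h by fastforce
  qed
  have SV: "c2 (comp_upto v k) \<and> (\<forall>x\<in>{0..1}. Dw (comp_upto v k) x \<le> E \<and> \<bar>nonlin (comp_upto v k) x\<bar> \<le> E * P)"
    if "k \<le> n" for k
  proof -
    have h: "c2 (comp_upto v k) \<and> (\<forall>x\<in>{0..1}. Dw (comp_upto v k) x \<le> exp (\<Sum>i=1..k. \<gamma> i)
      \<and> \<bar>nonlin (comp_upto v k) x\<bar> \<le> exp (\<Sum>i=1..n. \<gamma> i) * (\<Sum>i=1..k. \<gamma> i))"
      by (rule seq_bounds[OF cv gv that])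
    have k1: "(\<Sum>i=1..k. \<gamma> i) \<le> P" using sum_le_n[OF that, of \<gamma>] a0 b0 sg unfolding \<gamma>_def by force
    have "exp (\<Sum>i=1..k. \<gamma> i) \<le> E" unfolding E_def using k1 by simp
    moreover have "exp (\<Sum>i=1..n. \<gamma> i) * (\<Sum>i=1..k. \<gamma> i) \<le> E * P"
      unfolding E_def using k1 sg sg0[OF that] by (intro mult_mono) auto
    ultimately show ?thesis using h by fastforce
  qed
  define R where "R k = exp (Kd * (\<Sum>i=1..k. \<beta> i)) * (2 * E * (\<Sum>i=1..k. \<alpha> i))" for k
  have DC: "\<bar>Dw (comp_upto u k) x - Dw (comp_upto v k) x\<bar> \<le> Kd * min r (2 * E * P)
       \<and> \<bar>comp_upto u k x - comp_upto v k x\<bar> \<le> Kd * min r (2 * E * P)"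
    if k: "k \<le> n" and r: "\<And>x. x \<in> {0..1} \<Longrightarrow> \<bar>nonlin (comp_upto u k) x - nonlin (comp_upto v k) x\<bar> \<le> r"
      and x: "x \<in> {0..1}" for k r x
  proof -
    have eb: "\<bar>nonlin (comp_upto u k) y - nonlin (comp_upto v k) y\<bar> \<le> min r (2 * E * P)"
      if "y \<in> {0..1}" for y
      using r[OF that] SU[OF k] SV[OF k] that by fastforce
    show ?thesis
      using c2_close[OF conjunct1[OF SU[OF k]] conjunct1[OF SV[OF k]] _ eb, of "E * P" "2 * E * P", OF _ _ _ x]
        SV[OF k] unfolding Kd_def by auto
  qed
  have RI: "k \<le> n \<Longrightarrow> (\<forall>x\<in>{0..1}. \<bar>nonlin (comp_upto u k) x - nonlin (comp_upto v k) x\<bar> \<le> R k)" for k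
  proof (induction k)
    case 0
    then show ?case unfolding R_def by simp
  next
    case (Suc k)
    have k: "k \<le> n" using Suc.prems by simp
    have sk: "Suc k \<in> {1..n}" using Suc.prems by auto
    define G where "G = comp_upto u k"
    define H where "H = comp_upto v k"
    have cG: "c2 G" and cH: "c2 H" using SU[OF k] SV[OF k] G_def H_def by auto
    have IH: "\<And>x. x \<in> {0..1} \<Longrightarrow> \<bar>nonlin G x - nonlin H x\<bar> \<le> R k" using Suc.IH k G_def H_def by auto
    have R0: "R k \<ge> 0" unfolding R_def using a0 b0 k E1
      by (intro mult_nonneg_nonneg sum_nonneg) (auto intro: sum_nonneg)
    show ?case
    proof
      fix x :: real assume x: "x \<in> {0..1}"
      have Gx: "G x \<in> {0..1}" by (rule c2_range[OF cG x])
      have Hx: "H x \<in> {0..1}" by (rule c2_range[OF cH x])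
      have DG: "Dw G x \<le> E" "Dw G x > 0" using SU[OF k] c2D(3)[OF cG x] x G_def by auto
      have DH: "Dw H x \<le> E" "Dw H x > 0" using SV[OF k] c2D(3)[OF cH x] x H_def by auto
      have dd: "\<bar>Dw G x - Dw H x\<bar> \<le> Kd * R k"
      proof -
        have "\<bar>Dw G x - Dw H x\<bar> \<le> Kd * min (R k) (2 * E * P)"
          using DC[OF k _ x, of "R k"] IH G_def H_def by auto
        also have "\<dots> \<le> Kd * R k" using Kd1 by (intro mult_left_mono) auto
        finally show ?thesis .
      qed
      have "nonlin (comp_upto u (Suc k)) x - nonlin (comp_upto v (Suc k)) x
          = (nonlin (u (Suc k)) (G x) - N (Suc k)) * Dw G x + N (Suc k) * (Dw G x - Dw H x)
            - (nonlin (v (Suc k)) (H x) - N (Suc k)) * Dw H x + (nonlin G x - nonlin H x)"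
        using nonlin_comp[OF cu[OF sk] cG x] nonlin_comp[OF cv[OF sk] cH x]
        by (simp add: G_def H_def algebra_simps)
      also have "\<bar>\<dots>\<bar> \<le> \<alpha> (Suc k) * E + \<beta> (Suc k) * (Kd * R k) + \<alpha> (Suc k) * E + R k"
      proof -
        have t1: "\<bar>(nonlin (u (Suc k)) (G x) - N (Suc k)) * Dw G x\<bar> \<le> \<alpha> (Suc k) * E"
          unfolding abs_mult using au[OF sk Gx] DG a0[OF sk] by (intro mult_mono) auto
        have t2: "\<bar>N (Suc k) * (Dw G x - Dw H x)\<bar> \<le> \<beta> (Suc k) * (Kd * R k)"
          unfolding abs_mult using bN[OF sk] dd b0[OF sk] by (intro mult_mono) auto
        have t3: "\<bar>(nonlin (v (Suc k)) (H x) - N (Suc k)) * Dw H x\<bar> \<le> \<alpha> (Suc k) * E"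
          unfolding abs_mult using av[OF sk Hx] DH a0[OF sk] by (intro mult_mono) auto
        show ?thesis using t1 t2 t3 IH[OF x] by linarith
      qed
      also have "\<dots> = R k * (1 + Kd * \<beta> (Suc k)) + 2 * E * \<alpha> (Suc k)" by (simp add: algebra_simps)
      also have "\<dots> \<le> R (Suc k)"
      proof -
        define sb where "sb = (\<Sum>i=1..k. \<beta> i)"
        define sa where "sa = (\<Sum>i=1..k. \<alpha> i)"
        have sb0: "sb \<ge> 0" unfolding sb_def using b0 k by (intro sum_nonneg) auto
        have RS: "R (Suc k) = exp (Kd * sb) * exp (Kd * \<beta> (Suc k)) * (2 * E * sa)
             + exp (Kd * sb + Kd * \<beta> (Suc k)) * (2 * E * \<alpha> (Suc k))"
          unfolding R_def sb_def sa_def by (simp add: algebra_simps exp_add)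
        have Rk: "R k = exp (Kd * sb) * (2 * E * sa)" unfolding R_def sb_def sa_def by simp
        have e1: "1 + Kd * \<beta> (Suc k) \<le> exp (Kd * \<beta> (Suc k))" by (rule exp_ge_add_one_self_aux) (use Kd1 b0[OF sk] in simp)
        have "R k * (1 + Kd * \<beta> (Suc k)) \<le> R k * exp (Kd * \<beta> (Suc k))"
          using R0 e1 by (intro mult_left_mono) auto
        also have "\<dots> = exp (Kd * sb) * exp (Kd * \<beta> (Suc k)) * (2 * E * sa)" unfolding Rk by simp
        finally have A1: "R k * (1 + Kd * \<beta> (Suc k)) \<le> exp (Kd * sb) * exp (Kd * \<beta> (Suc k)) * (2 * E * sa)" .
        have ee: "1 \<le> exp (Kd * sb + Kd * \<beta> (Suc k))" using Kd1 sb0 b0[OF sk] by simp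
        have "0 \<le> 2 * E * \<alpha> (Suc k)" using E1 a0[OF sk] by simp
        then have A2: "2 * E * \<alpha> (Suc k) \<le> exp (Kd * sb + Kd * \<beta> (Suc k)) * (2 * E * \<alpha> (Suc k))"
          using mult_right_mono[OF ee, of "2 * E * \<alpha> (Suc k)"] by simp
        show ?thesis unfolding RS using A1 A2 by linarith
      qed
      finally show "\<bar>nonlin (comp_upto u (Suc k)) x - nonlin (comp_upto v (Suc k)) x\<bar> \<le> R (Suc k)" .
    qed
  qed
  define G where "G = comp_upto u n"
  define H where "H = comp_upto v n"
  have cG: "c2 G" and cH: "c2 H" using SU[of n] SV[of n] G_def H_def by auto
  have Rn: "\<And>x. x \<in> {0..1} \<Longrightarrow> \<bar>nonlin G x - nonlin H x\<bar> \<le> R n" using RI[of n] G_def H_def by auto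
  have R0: "R n \<ge> 0" using Rn[of 0] by auto
  have DCn: "\<bar>Dw G x - Dw H x\<bar> \<le> Kd * R n \<and> \<bar>G x - H x\<bar> \<le> Kd * R n" if x: "x \<in> {0..1}" for x
  proof -
    have "Kd * min (R n) (2 * E * P) \<le> Kd * R n" using Kd1 by (intro mult_left_mono) auto
    then show ?thesis using DC[OF order_refl _ x, of "R n"] Rn G_def H_def by fastforce
  qed
  have D2: "\<bar>Dw (Dw G) x - Dw (Dw H) x\<bar> \<le> (E + E * P * Kd) * R n" if x: "x \<in> {0..1}" for x
  proof -
    have pG: "Dw G x > 0" using c2D(3)[OF cG x] .
    have pH: "Dw H x > 0" using c2D(3)[OF cH x] .
    have "Dw (Dw G) x - Dw (Dw H) x = (nonlin G x - nonlin H x) * Dw G x + nonlin H x * (Dw G x - Dw H x)"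
      using pG pH unfolding nonlin_def by (simp add: field_simps)
    also have "\<bar>\<dots>\<bar> \<le> R n * E + (E * P) * (Kd * R n)"
    proof -
      have t1: "\<bar>(nonlin G x - nonlin H x) * Dw G x\<bar> \<le> R n * E"
        unfolding abs_mult using Rn[OF x] SU[of n] x pG R0 G_def by (intro mult_mono) auto
      have t2: "\<bar>nonlin H x * (Dw G x - Dw H x)\<bar> \<le> (E * P) * (Kd * R n)"
        unfolding abs_mult using SV[of n] x DCn[OF x] H_def E1 P0 by (intro mult_mono) auto
      show ?thesis using t1 t2 by linarith
    qed
    also have "\<dots> = (E + E * P * Kd) * R n" by (simp add: algebra_simps)
    finally show ?thesis .
  qed
  have "dC2 G H \<le> Kd * R n + Kd * R n + (E + E * P * Kd) * R n"
    by (rule dC2_le) (use DCn D2 in auto)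
  also have "\<dots> = (Kd + Kd + (E + E * P * Kd)) * R n" by (simp add: algebra_simps)
  also have "\<dots> \<le> (Kd + Kd + (E + E * P * Kd)) * (exp (Kd * B) * (2 * E) * (\<Sum>i=1..n. \<alpha> i))"
  proof (rule mult_left_mono)
    have sa0: "(\<Sum>i=1..n. \<alpha> i) \<ge> 0" using a0 by (intro sum_nonneg) auto
    have "exp (Kd * (\<Sum>i=1..n. \<beta> i)) \<le> exp (Kd * B)" using sB Kd1 by simp
    then show "R n \<le> exp (Kd * B) * (2 * E) * (\<Sum>i=1..n. \<alpha> i)"
      unfolding R_def using sa0 E1 by (simp add: mult_right_mono mult.assoc)
    show "0 \<le> Kd + Kd + (E + E * P * Kd)" using Kd1 E1 P0 by simp
  qed
  finally show ?thesis unfolding G_def H_def by (simp add: mult.assoc)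
qed



lemma int_bounds:
  fixes h :: "real \<Rightarrow> real"
  assumes "continuous_on {0..1} h" "\<And>y. y \<in> {0..1::real} \<Longrightarrow> lo \<le> h y \<and> h y \<le> hi"
  shows "lo \<le> integral {0..1} h \<and> integral {0..1} h \<le> hi"
proof -
  have i: "h integrable_on {0..1}" by (rule integrable_continuous_interval[OF assms(1)])
  have c: "(\<lambda>x. c) integrable_on {0..1::real}" for c :: real
    using integrable_const[of c 0 "1::real"] by simp
  have "lo \<le> integral {0..1} h"
    using integral_le[OF c[of lo] i] assms(2) by auto
  moreover have "integral {0..1} h \<le> hi"
    using integral_le[OF i c[of hi]] assms(2) by auto
  ultimately show ?thesis by blast
qed

lemma zoom_eq: "zoom a b g = (\<lambda>x. (g (a + x * (b - a)) - g a) / (g b - g a))"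
  by (rule ext) (simp add: zoom_def)

lemma zoom_props:
  assumes cg: "c2 g" and ab: "0 \<le> a" "a < b" "b \<le> 1"
  shows "c2 (zoom a b g)"
    and "\<And>x. x \<in> {0..1} \<Longrightarrow> nonlin (zoom a b g) x = (b - a) * nonlin g (a + x * (b - a))"
proof -
  define d where "d = b - a"
  define K where "K = g b - g a"
  have d0: "d > 0" using ab d_def by simp
  have K0: "K > 0" unfolding K_def using c2_mono[OF cg, of a b] ab by auto
  have Ain: "a + x * d \<in> {0..1}" if "x \<in> {0..1}" for x
  proof -
    have "x * d \<le> 1 * d" using that d0 by (intro mult_right_mono) auto
    then have "a + x * d \<le> 1" using ab d_def by linarith
    moreover have "x * d \<ge> 0" using that d0 by auto
    ultimately show ?thesis using ab by auto
  qed
  have sub: "(\<lambda>x. a + x * d) ` {0..1} \<subseteq> {0..1}" using Ain by auto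
  have dA: "((\<lambda>x. a + x * d) has_real_derivative d) (at x within {0..1})" for x
    by (auto intro!: derivative_eq_intros)
  have ch: "((\<lambda>x. F (a + x * d)) has_real_derivative F' (a + x * d) * d) (at x within {0..1})"
    if "x \<in> {0..1}" "\<And>y. y \<in> {0..1} \<Longrightarrow> (F has_real_derivative F' y) (at y within {0..1})" for x F F'
    using DERIV_image_chain[OF DERIV_subset[OF that(2)[OF Ain[OF that(1)]] sub] dA] by (simp add: o_def)
  have z: "zoom a b g = (\<lambda>x. (g (a + x * d) - g a) / K)" unfolding zoom_eq d_def K_def ..
  have d1: "(zoom a b g has_real_derivative Dw g (a + x * d) * d / K) (at x within {0..1})"
    if "x \<in> {0..1}" for x
    unfolding z using ch[OF that c2D(1)[OF cg]] K0 by (auto intro!: derivative_eq_intros)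
  have e1: "Dw (zoom a b g) x = Dw g (a + x * d) * d / K" if "x \<in> {0..1}" for x
    by (rule Dw_eq[OF d1[OF that] that])
  have d2': "((\<lambda>x. Dw g (a + x * d) * d / K) has_real_derivative Dw (Dw g) (a + x * d) * d * d / K) (at x within {0..1})"
    if "x \<in> {0..1}" for x
    using ch[OF that c2D(2)[OF cg]] K0 by (auto intro!: derivative_eq_intros)
  have d2: "(Dw (zoom a b g) has_real_derivative Dw (Dw g) (a + x * d) * d * d / K) (at x within {0..1})"
    if "x \<in> {0..1}" for x
    by (rule deriv_transform[OF d2'[OF that] that]) (simp add: e1)
  have e2: "Dw (Dw (zoom a b g)) x = Dw (Dw g) (a + x * d) * d * d / K" if "x \<in> {0..1}" for x
    by (rule Dw_eq[OF d2[OF that] that])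
  show "c2 (zoom a b g)" unfolding c2_def
  proof (intro conjI ballI)
    fix x :: real assume x: "x \<in> {0..1}"
    show "(zoom a b g has_real_derivative Dw (zoom a b g) x) (at x within {0..1})" using d1[OF x] e1[OF x] by simp
    show "(Dw (zoom a b g) has_real_derivative Dw (Dw (zoom a b g)) x) (at x within {0..1})" using d2[OF x] e2[OF x] by simp
    show "Dw (zoom a b g) x > 0" using e1[OF x] c2D(3)[OF cg Ain[OF x]] d0 K0 by simp
  qed (use K0 in \<open>simp_all add: zoom_def K_def\<close>)
  show "nonlin (zoom a b g) x = (b - a) * nonlin g (a + x * (b - a))" if "x \<in> {0..1}" for x
    using c2D(3)[OF cg Ain[OF that]] d0 K0 unfolding nonlin_def e1[OF that] e2[OF that] d_def[symmetric]
    by (simp add: field_simps)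
qed



lemma holder_const:
  fixes h :: "real \<Rightarrow> real"
  assumes nu: "\<nu> > 1" and H: "\<And>x y. x \<in> {0..1} \<Longrightarrow> y \<in> {0..1} \<Longrightarrow> \<bar>h x - h y\<bar> \<le> K * \<bar>x - y\<bar> powr \<nu>"
  shows "\<exists>c. \<forall>x\<in>{0..1}. h x = c"
proof (rule has_field_derivative_zero_constant[OF convex_real_interval(5)])
  fix x :: real assume x: "x \<in> {0..1}"
  show "(h has_real_derivative 0) (at x within {0..1})"
    unfolding has_field_derivative_iff
  proof (rule Lim_null_comparison)
    show "\<forall>\<^sub>F y in at x within {0..1}. norm ((h y - h x) / (y - x)) \<le> K * \<bar>y - x\<bar> powr (\<nu> - 1)"
      unfolding eventually_at_filter
    proof (intro always_eventually allI impI)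
      fix y assume y: "y \<noteq> x" "y \<in> {0..1}"
      have p: "\<bar>y - x\<bar> > 0" using y by simp
      have "norm ((h y - h x) / (y - x)) = \<bar>h y - h x\<bar> / \<bar>y - x\<bar>" by (simp add: abs_divide)
      also have "\<dots> \<le> K * \<bar>y - x\<bar> powr \<nu> / \<bar>y - x\<bar>"
        using H[OF y(2) x] p by (intro divide_right_mono) auto
      also have "\<dots> = K * \<bar>y - x\<bar> powr (\<nu> - 1)" using p by (simp add: powr_diff)
      finally show "norm ((h y - h x) / (y - x)) \<le> K * \<bar>y - x\<bar> powr (\<nu> - 1)" .
    qed
    have t: "((\<lambda>y. \<bar>y - x\<bar>) \<longlongrightarrow> 0) (at x within {0..1})"
    proof -
      have "((\<lambda>y. \<bar>y - x\<bar>) \<longlongrightarrow> \<bar>x - x\<bar>) (at x within {0..1})" by (intro tendsto_intros)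
      then show ?thesis by simp
    qed
    have "((\<lambda>y. \<bar>y - x\<bar> powr (\<nu> - 1)) \<longlongrightarrow> 0) (at x within {0..1})"
      by (rule tendsto_zero_powrI[OF t tendsto_const]) (use nu in auto)
    then show "((\<lambda>y. K * \<bar>y - x\<bar> powr (\<nu> - 1)) \<longlongrightarrow> 0) (at x within {0..1})"
      using tendsto_mult_right_zero by blast
  qed
qed

lemma C2nu_c2:
  assumes "C2nu_diffeo01 \<nu> g" "g 0 = 0" "g 1 = 1"
  shows "c2 g" "continuous_on {0..1} (nonlin g)"
proof -
  have C: "C2_diffeo01 g" using assms(1) unfolding C2nu_diffeo01_def by auto
  then show "c2 g" using assms(2,3) unfolding C2_diffeo01_def c2_def by auto
  have c1: "continuous_on {0..1} (Dw g)"
    using C unfolding C2_diffeo01_def continuous_on_eq_continuous_within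
    by (meson DERIV_continuous)
  have c2': "continuous_on {0..1} (Dw (Dw g))" using C unfolding C2_diffeo01_def by auto
  have "continuous_on {0..1} (\<lambda>x. Dw (Dw g) x / Dw g x)"
    by (rule continuous_on_divide[OF c2' c1]) (use C in \<open>auto simp: C2_diffeo01_def\<close>)
  then show "continuous_on {0..1} (nonlin g)" unfolding nonlin_def[abs_def] .
qed

lemma nonlin_zero_big_nu:
  assumes nu: "\<nu> > 1" and g: "C2nu_diffeo01 \<nu> g" "g 0 = 0" "g 1 = 1"
    and H: "\<And>x y. x \<in> {0..1} \<Longrightarrow> y \<in> {0..1} \<Longrightarrow> \<bar>nonlin g x - nonlin g y\<bar> \<le> C * \<bar>x - y\<bar> powr \<nu>"
    and x: "x \<in> {0..1}"
  shows "nonlin g x = 0"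
proof -
  have cg: "c2 g" using C2nu_c2[OF g] by simp
  obtain K where K: "\<And>x y. x \<in> {0..1} \<Longrightarrow> y \<in> {0..1} \<Longrightarrow> \<bar>Dw (Dw g) x - Dw (Dw g) y\<bar> \<le> K * \<bar>x - y\<bar> powr \<nu>"
    using g(1) unfolding C2nu_diffeo01_def by blast
  obtain k where k: "\<And>x. x \<in> {0..1} \<Longrightarrow> Dw (Dw g) x = k" using holder_const[OF nu K] by blast
  obtain c where c: "\<And>x. x \<in> {0..1} \<Longrightarrow> nonlin g x = c" using holder_const[OF nu H] by blast
  have c0: "c = 0"
  proof (rule ccontr)
    assume "c \<noteq> 0"
    then have D: "Dw g y = k / c" if "y \<in> {0..1}" for y
      using c[OF that] k[OF that] c2D(3)[OF cg that] unfolding nonlin_def by (auto simp: field_simps)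
    have "(Dw g has_real_derivative 0) (at 0 within {0..1})"
      by (rule deriv_transform[of "\<lambda>_. k / c"]) (auto simp: D)
    then have "Dw (Dw g) 0 = 0" by (rule Dw_eq) simp
    then have "k = 0" using k[of 0] by simp
    then have "Dw g 0 = 0" using D[of 0] by simp
    then show False using c2D(3)[OF cg, of 0] by simp
  qed
  show ?thesis using c[OF x] c0 by simp
qed

lemma Mob_props:
  shows "c2 (Mob N)" and "\<And>x. x \<in> {0..1} \<Longrightarrow> \<bar>nonlin (Mob N) x - N\<bar> \<le> N\<^sup>2 * exp \<bar>N\<bar>"
proof -
  define y where "y = - N / 2"
  define c where "c = exp y"
  define t where "t = c - 1"
  have mob: "Mob N = (\<lambda>x. x * c / (1 + x * t))" unfolding Mob_def c_def t_def y_def by (rule ext) simp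
  have c0: "c > 0" unfolding c_def by simp
  have denlb: "1 + x * t \<ge> exp (- \<bar>N\<bar> / 2)" if "x \<in> {0..1}" for x
  proof -
    have "1 + x * t = (1 - x) * 1 + x * c" unfolding t_def by (simp add: algebra_simps)
    moreover have "exp (- \<bar>N\<bar> / 2) \<le> 1" by simp
    moreover have "exp (- \<bar>N\<bar> / 2) \<le> c" unfolding c_def y_def by simp
    moreover have "(1 - x) * exp (- \<bar>N\<bar> / 2) \<le> (1 - x) * 1" using that by (intro mult_left_mono) auto
    moreover have "x * exp (- \<bar>N\<bar> / 2) \<le> x * c" using that \<open>exp (- \<bar>N\<bar> / 2) \<le> c\<close> by (intro mult_left_mono) auto
    ultimately show ?thesis by (simp add: algebra_simps)
  qed
  have den0: "1 + x * t > 0" if "x \<in> {0..1}" for x using denlb[OF that] by (smt (verit) exp_gt_zero)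
  have d1: "(Mob N has_real_derivative c / (1 + x * t)\<^sup>2) (at x within {0..1})" if "x \<in> {0..1}" for x
  proof -
    have "((\<lambda>x. x * c / (1 + x * t)) has_real_derivative c / (1 + x * t)\<^sup>2) (at x)"
      using den0[OF that] by (auto intro!: derivative_eq_intros simp: field_simps power2_eq_square)
    then show ?thesis unfolding mob by (rule has_field_derivative_at_within)
  qed
  have e1: "Dw (Mob N) x = c / (1 + x * t)\<^sup>2" if "x \<in> {0..1}" for x by (rule Dw_eq[OF d1[OF that] that])
  have d2: "(Dw (Mob N) has_real_derivative - 2 * c * t / (1 + x * t) ^ 3) (at x within {0..1})" if "x \<in> {0..1}" for x
  proof -
    have dp: "1 + x * t \<noteq> 0" using den0[OF that] by simp
    have g: "((\<lambda>x. (1 + x * t)\<^sup>2) has_real_derivative 2 * (1 + x * t) * t) (at x)"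
      by (auto intro!: derivative_eq_intros)
    have q: "((\<lambda>x. c / (1 + x * t)\<^sup>2) has_real_derivative
        (0 * (1 + x * t)\<^sup>2 - 2 * (1 + x * t) * t * c) / (((1 + x * t)\<^sup>2) ^ Suc (Suc 0))) (at x)"
      by (rule DERIV_quotient[OF DERIV_const g]) (use dp in simp)
    have alg: "(0 * D\<^sup>2 - 2 * D * t * c) / ((D\<^sup>2) ^ Suc (Suc 0)) = - 2 * c * t / D ^ 3"
      if "D \<noteq> 0" for D :: real
      using that by (simp add: field_simps power2_eq_square power3_eq_cube)
    have "((\<lambda>x. c / (1 + x * t)\<^sup>2) has_real_derivative - 2 * c * t / (1 + x * t) ^ 3) (at x)"
      using q alg[OF dp] by simp
    then show ?thesis by (rule deriv_transform[OF has_field_derivative_at_within that]) (simp add: e1)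
  qed
  have e2: "Dw (Dw (Mob N)) x = - 2 * c * t / (1 + x * t) ^ 3" if "x \<in> {0..1}" for x by (rule Dw_eq[OF d2[OF that] that])
  show "c2 (Mob N)" unfolding c2_def
  proof (intro conjI ballI)
    fix x :: real assume x: "x \<in> {0..1}"
    show "(Mob N has_real_derivative Dw (Mob N) x) (at x within {0..1})" using d1[OF x] e1[OF x] by simp
    show "(Dw (Mob N) has_real_derivative Dw (Dw (Mob N)) x) (at x within {0..1})" using d2[OF x] e2[OF x] by simp
    show "Dw (Mob N) x > 0" using e1[OF x] den0[OF x] c0 by simp
  qed (use c0 in \<open>simp_all add: mob t_def\<close>)
  show "\<bar>nonlin (Mob N) x - N\<bar> \<le> N\<^sup>2 * exp \<bar>N\<bar>" if x: "x \<in> {0..1}" for x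
  proof -
    have dp: "1 + x * t > 0" by (rule den0[OF x])
    have nl: "nonlin (Mob N) x = - 2 * t / (1 + x * t)"
    proof -
      have alg: "(- 2 * c * t / D ^ 3) / (c / D\<^sup>2) = - 2 * t / D" if "D \<noteq> 0" for D :: real
        using that c0 by (simp add: field_simps power2_eq_square power3_eq_cube)
      show ?thesis unfolding nonlin_def e1[OF x] e2[OF x] using alg dp by simp
    qed
    have eq: "nonlin (Mob N) x - N = (- 2 * (t - y) + 2 * y * x * t) / (1 + x * t)"
      unfolding nl y_def using dp by (simp add: field_simps)
    have tb: "\<bar>t\<bar> \<le> \<bar>y\<bar> * exp \<bar>y\<bar>" unfolding t_def c_def by (rule exp_E1)
    have tyb: "\<bar>t - y\<bar> \<le> y\<^sup>2 * exp \<bar>y\<bar>" unfolding t_def c_def by (rule exp_E2)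
    have "\<bar>2 * y * x * t\<bar> \<le> 2 * \<bar>y\<bar> * \<bar>t\<bar>"
    proof -
      have "\<bar>2 * y * x * t\<bar> = 2 * \<bar>y\<bar> * \<bar>t\<bar> * x" using x by (simp add: abs_mult)
      also have "\<dots> \<le> 2 * \<bar>y\<bar> * \<bar>t\<bar> * 1" using x by (intro mult_left_mono) auto
      finally show ?thesis by simp
    qed
    also have "\<dots> \<le> 2 * \<bar>y\<bar> * (\<bar>y\<bar> * exp \<bar>y\<bar>)" using tb by (intro mult_left_mono) auto
    finally have b2: "\<bar>2 * y * x * t\<bar> \<le> 2 * \<bar>y\<bar> * (\<bar>y\<bar> * exp \<bar>y\<bar>)" .
    have tri: "\<bar>- 2 * (t - y) + 2 * y * x * t\<bar> \<le> 2 * \<bar>t - y\<bar> + \<bar>2 * y * x * t\<bar>"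
    proof -
      have "\<bar>- 2 * (t - y)\<bar> = 2 * \<bar>t - y\<bar>" by (simp add: abs_if)
      then show ?thesis using abs_triangle_ineq[of "- 2 * (t - y)" "2 * y * x * t"] by linarith
    qed
    have "\<bar>- 2 * (t - y) + 2 * y * x * t\<bar> \<le> 4 * y\<^sup>2 * exp \<bar>y\<bar>"
    proof -
      have yy: "\<bar>y\<bar> * (\<bar>y\<bar> * exp \<bar>y\<bar>) = y\<^sup>2 * exp \<bar>y\<bar>"
        by (simp add: power2_eq_square mult.assoc[symmetric])
      show ?thesis using tri b2 tyb yy by linarith
    qed
    moreover have "4 * y\<^sup>2 * exp \<bar>y\<bar> = N\<^sup>2 * exp (\<bar>N\<bar> / 2)" unfolding y_def
      by (simp add: power2_eq_square abs_divide)
    ultimately have nb: "\<bar>- 2 * (t - y) + 2 * y * x * t\<bar> \<le> N\<^sup>2 * exp (\<bar>N\<bar> / 2)" by simp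
    have "\<bar>nonlin (Mob N) x - N\<bar> = \<bar>- 2 * (t - y) + 2 * y * x * t\<bar> / (1 + x * t)"
      unfolding eq using dp by (simp add: abs_divide)
    also have "\<dots> \<le> N\<^sup>2 * exp (\<bar>N\<bar> / 2) / exp (- \<bar>N\<bar> / 2)"
      using nb denlb[OF x] by (intro frac_le) auto
    also have "\<dots> = N\<^sup>2 * exp \<bar>N\<bar>" by (simp add: exp_diff[symmetric] exp_minus field_simps flip: exp_add)
    finally show ?thesis .
  qed
qed



definition KC :: "real \<Rightarrow> real \<Rightarrow> real" where
  "KC A B = (let P = A + B; E = exp P; Kd = exp (E * P) * exp (2 * E * P)
     in (Kd + Kd + (E + E * P * Kd)) * (exp (Kd * B) * (2 * E)))"

lemma KC_nonneg: "A \<ge> 0 \<Longrightarrow> B \<ge> 0 \<Longrightarrow> KC A B \<ge> 0"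
  unfolding KC_def Let_def by (intro mult_nonneg_nonneg add_nonneg_nonneg) auto

lemma core':
  fixes u v :: "nat \<Rightarrow> real \<Rightarrow> real" and N \<alpha> \<beta> :: "nat \<Rightarrow> real"
  assumes cu: "\<And>i. i \<in> {1..n} \<Longrightarrow> c2 (u i)"
    and cv: "\<And>i. i \<in> {1..n} \<Longrightarrow> c2 (v i)"
    and au: "\<And>i x. i \<in> {1..n} \<Longrightarrow> x \<in> {0..1} \<Longrightarrow> \<bar>nonlin (u i) x - N i\<bar> \<le> \<alpha> i"
    and av: "\<And>i x. i \<in> {1..n} \<Longrightarrow> x \<in> {0..1} \<Longrightarrow> \<bar>nonlin (v i) x - N i\<bar> \<le> \<alpha> i"
    and bN: "\<And>i. i \<in> {1..n} \<Longrightarrow> \<bar>N i\<bar> \<le> \<beta> i"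
    and sA: "(\<Sum>i=1..n. \<alpha> i) \<le> A" and sB: "(\<Sum>i=1..n. \<beta> i) \<le> B"
  shows "dC2 (comp_upto u n) (comp_upto v n) \<le> KC A B * (\<Sum>i=1..n. \<alpha> i)"
  using core[OF assms] unfolding KC_def Let_def .

theorem proposition2p3:
  fixes \<nu> C0 C1 :: real and f :: "nat \<Rightarrow> real \<Rightarrow> real"
  assumes "\<nu> > 0" and "C0 > 0" and "C1 > 0"
    and "\<And>i. i \<ge> 1 \<Longrightarrow> C2nu_diffeo01 \<nu> (f i)"
    and "\<And>i. i \<ge> 1 \<Longrightarrow> f i 0 = 0 \<and> f i 1 = 1"
    and "\<And>i x y. i \<ge> 1 \<Longrightarrow> x \<in> {0..1} \<Longrightarrow> y \<in> {0..1} \<Longrightarrow>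
           \<bar>nonlin (f i) x - nonlin (f i) y\<bar> \<le> C0 * \<bar>x - y\<bar> powr \<nu>"
    and "\<And>i x. i \<ge> 1 \<Longrightarrow> x \<in> {0..1} \<Longrightarrow> \<bar>nonlin (f i) x\<bar> \<le> C1"
  shows "\<forall>C2>0. \<exists>C3>0. \<forall>(n::nat) (a::nat \<Rightarrow> real) (b::nat \<Rightarrow> real).
           n \<ge> 1 \<longrightarrow>
           (\<forall>i\<in>{1..n}. 0 \<le> a i \<and> a i < b i \<and> b i \<le> 1) \<longrightarrow>
           (\<Sum>i=1..n. b i - a i) \<le> C2 \<longrightarrow>
           dC2 (comp_upto (\<lambda>i. zoom (a i) (b i) (f i)) n)
               (comp_upto (\<lambda>i. Mob (Nint (zoom (a i) (b i) (f i)))) n)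
             \<le> C3 * (Max ((\<lambda>j. b j - a j) ` {1..n})) powr \<nu>"
proof (intro allI impI)
  fix C2 :: real assume C2: "C2 > 0"
  note nu = assms(1) and C0 = assms(2) and C1 = assms(3) and fC = assms(4) and fe = assms(5)
    and fH = assms(6) and fB = assms(7)
  define Km where "Km = exp C1"
  define Ca where "Ca = C0 + Km * C1\<^sup>2"
  define A0 where "A0 = Ca * C2"
  define B0 where "B0 = C1 * C2"
  have Ca0: "Ca > 0" unfolding Ca_def Km_def using C0 by (simp add: add_pos_nonneg)
  have A00: "A0 \<ge> 0" and B00: "B0 \<ge> 0" unfolding A0_def B0_def using Ca0 C1 C2 by auto
  define C3 where "C3 = KC A0 B0 * Ca * C2 + 1"
  have KC0: "KC A0 B0 \<ge> 0" by (rule KC_nonneg[OF A00 B00])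
  show "\<exists>C3>0. \<forall>(n::nat) (a::nat \<Rightarrow> real) (b::nat \<Rightarrow> real).
           n \<ge> 1 \<longrightarrow>
           (\<forall>i\<in>{1..n}. 0 \<le> a i \<and> a i < b i \<and> b i \<le> 1) \<longrightarrow>
           (\<Sum>i=1..n. b i - a i) \<le> C2 \<longrightarrow>
           dC2 (comp_upto (\<lambda>i. zoom (a i) (b i) (f i)) n)
               (comp_upto (\<lambda>i. Mob (Nint (zoom (a i) (b i) (f i)))) n)
             \<le> C3 * (Max ((\<lambda>j. b j - a j) ` {1..n})) powr \<nu>"
  proof (intro exI[of _ C3] conjI allI impI)
    show "C3 > 0" unfolding C3_def using KC0 Ca0 C2 by (simp add: add_nonneg_pos)
    fix n :: nat and a b :: "nat \<Rightarrow> real"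
    assume n1: "n \<ge> 1" and ab: "\<forall>i\<in>{1..n}. 0 \<le> a i \<and> a i < b i \<and> b i \<le> 1"
      and sd: "(\<Sum>i=1..n. b i - a i) \<le> C2"
    define \<delta> where "\<delta> i = b i - a i" for i
    define m where "m = Max ((\<lambda>j. b j - a j) ` {1..n})"
    define u where "u i = zoom (a i) (b i) (f i)" for i
    define N where "N i = Nint (u i)" for i
    define v where "v i = Mob (N i)" for i
    define \<alpha> where "\<alpha> i = C0 * (\<delta> i * \<delta> i powr \<nu>) + Km * (N i)\<^sup>2" for i
    define \<beta> where "\<beta> i = C1 * \<delta> i" for i
    have dm: "\<delta> i \<le> m" "0 < \<delta> i" "\<delta> i \<le> 1" if "i \<in> {1..n}" for i
    proof -
      show "\<delta> i \<le> m" unfolding m_def \<delta>_def using that by (intro Max_ge) auto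
      show "0 < \<delta> i" "\<delta> i \<le> 1" unfolding \<delta>_def using ab[rule_format, OF that] by auto
    qed
    have m01: "0 < m" "m \<le> 1"
    proof -
      have ne: "(\<lambda>j. b j - a j) ` {1..n} \<noteq> {}" using n1 by auto
      obtain j where j: "j \<in> {1..n}" "m = b j - a j"
        using Max_in[OF _ ne] unfolding m_def by auto
      then show "0 < m" "m \<le> 1" using dm[OF j(1)] unfolding \<delta>_def by auto
    qed
    have per: "c2 (u i) \<and> c2 (v i) \<and> (\<forall>x\<in>{0..1}. \<bar>nonlin (u i) x - N i\<bar> \<le> \<alpha> i
        \<and> \<bar>nonlin (v i) x - N i\<bar> \<le> \<alpha> i) \<and> \<bar>N i\<bar> \<le> \<beta> i \<and> \<alpha> i \<le> Ca * \<delta> i * m powr \<nu>"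
      if i: "i \<in> {1..n}" for i
    proof -
      have i1: "i \<ge> 1" using i by simp
      have abi: "0 \<le> a i" "a i < b i" "b i \<le> 1" using ab i by auto
      have cf: "c2 (f i)" and cnf: "continuous_on {0..1} (nonlin (f i))"
        using C2nu_c2[OF fC[OF i1]] fe[OF i1] by auto
      have cu: "c2 (u i)" unfolding u_def by (rule zoom_props(1)[OF cf abi])
      have nu_eq: "nonlin (u i) x = \<delta> i * nonlin (f i) (a i + x * \<delta> i)" if "x \<in> {0..1}" for x
        unfolding u_def \<delta>_def by (rule zoom_props(2)[OF cf abi that])
      have Ain: "a i + x * \<delta> i \<in> {0..1}" if "x \<in> {0..1}" for x
      proof -
        have "x * \<delta> i \<le> 1 * \<delta> i" using that dm[OF i] by (intro mult_right_mono) auto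
        then have "a i + x * \<delta> i \<le> 1" using abi \<delta>_def[of i] by linarith
        moreover have "x * \<delta> i \<ge> 0" using that dm[OF i] by auto
        ultimately show ?thesis using abi by auto
      qed
      have cont: "continuous_on {0..1} (nonlin (u i))"
      proof -
        have "continuous_on {0..1} (\<lambda>x. nonlin (f i) (a i + x * \<delta> i))"
        proof (rule continuous_on_compose2[OF cnf])
          show "(\<lambda>x. a i + x * \<delta> i) ` {0..1} \<subseteq> {0..1}" using Ain by blast
        qed (auto intro!: continuous_intros)
        then have "continuous_on {0..1} (\<lambda>x. \<delta> i * nonlin (f i) (a i + x * \<delta> i))"
          by (intro continuous_intros)
        then show ?thesis using continuous_on_cong[OF refl, of "{0..1}" "nonlin (u i)" "\<lambda>x. \<delta> i * nonlin (f i) (a i + x * \<delta> i)"]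
          nu_eq by simp
      qed
      have nb: "\<bar>nonlin (u i) x\<bar> \<le> C1 * \<delta> i" if "x \<in> {0..1}" for x
      proof -
        have "\<bar>nonlin (u i) x\<bar> = \<delta> i * \<bar>nonlin (f i) (a i + x * \<delta> i)\<bar>"
          using nu_eq[OF that] dm[OF i] by (simp add: abs_mult)
        also have "\<dots> \<le> \<delta> i * C1" using fB[OF i1 Ain[OF that]] dm[OF i] by (intro mult_left_mono) auto
        finally show ?thesis by (simp add: mult.commute)
      qed
      have hb: "\<bar>nonlin (u i) x - nonlin (u i) y\<bar> \<le> C0 * (\<delta> i * \<delta> i powr \<nu>)"
        if "x \<in> {0..1}" "y \<in> {0..1}" for x y
      proof -
        have "\<bar>nonlin (u i) x - nonlin (u i) y\<bar>
            = \<delta> i * \<bar>nonlin (f i) (a i + x * \<delta> i) - nonlin (f i) (a i + y * \<delta> i)\<bar>"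
          using nu_eq[OF that(1)] nu_eq[OF that(2)] dm[OF i]
          by (simp add: abs_mult right_diff_distrib[symmetric])
        also have "\<dots> \<le> \<delta> i * (C0 * \<bar>(a i + x * \<delta> i) - (a i + y * \<delta> i)\<bar> powr \<nu>)"
          using fH[OF i1 Ain[OF that(1)] Ain[OF that(2)]] dm[OF i] by (intro mult_left_mono) auto
        also have "\<dots> \<le> \<delta> i * (C0 * \<delta> i powr \<nu>)"
        proof -
          have "\<bar>(a i + x * \<delta> i) - (a i + y * \<delta> i)\<bar> = \<bar>x - y\<bar> * \<delta> i"
            using dm[OF i] by (simp add: abs_mult left_diff_distrib[symmetric])
          also have "\<dots> \<le> 1 * \<delta> i" using that dm[OF i] by (intro mult_right_mono) auto
          finally have "\<bar>(a i + x * \<delta> i) - (a i + y * \<delta> i)\<bar> powr \<nu> \<le> \<delta> i powr \<nu>"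
            using nu by (intro powr_mono2) auto
          then show ?thesis using C0 dm[OF i] by (intro mult_left_mono) auto
        qed
        finally show ?thesis by (simp add: algebra_simps)
      qed
      have Nb: "\<bar>N i\<bar> \<le> C1 * \<delta> i"
        using int_bounds[OF cont, of "- (C1 * \<delta> i)" "C1 * \<delta> i"] nb unfolding N_def Nint_def
        by (force simp: abs_le_iff)
      have au: "\<bar>nonlin (u i) x - N i\<bar> \<le> C0 * (\<delta> i * \<delta> i powr \<nu>)" if x: "x \<in> {0..1}" for x
      proof -
        have "nonlin (u i) x - C0 * (\<delta> i * \<delta> i powr \<nu>) \<le> N i \<and> N i \<le> nonlin (u i) x + C0 * (\<delta> i * \<delta> i powr \<nu>)"
          unfolding N_def Nint_def
          by (rule int_bounds[OF cont]) (use hb[OF x] in \<open>force simp: abs_le_iff\<close>)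
        then show ?thesis by (simp add: abs_le_iff)
      qed
      have cv: "c2 (v i)" unfolding v_def by (rule Mob_props(1))
      have Nsq: "(N i)\<^sup>2 \<le> C1\<^sup>2 * \<delta> i * m powr \<nu>"
      proof (cases "\<nu> > 1")
        case True
        have z: "nonlin (u i) x = 0" if "x \<in> {0..1}" for x
          using nu_eq[OF that] nonlin_zero_big_nu[OF True fC[OF i1] _ _ fH[OF i1] Ain[OF that]] fe[OF i1] by simp
        have "0 \<le> N i \<and> N i \<le> 0"
          unfolding N_def Nint_def by (rule int_bounds[OF cont]) (simp add: z)
        then have "N i = 0" by simp
        moreover have "0 \<le> C1\<^sup>2 * \<delta> i * m powr \<nu>" using dm[OF i] by simp
        ultimately show ?thesis by simp
      next
        case False
        have "m \<le> m powr \<nu>" using powr_mono'[of \<nu> 1 m] False m01 by simp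
        then have dmn: "\<delta> i \<le> m powr \<nu>" using dm[OF i] by linarith
        have "(N i)\<^sup>2 \<le> (C1 * \<delta> i)\<^sup>2" using power_mono[OF Nb abs_ge_zero, of 2] by simp
        also have "\<dots> = C1\<^sup>2 * \<delta> i * \<delta> i" by (simp add: power2_eq_square)
        also have "\<dots> \<le> C1\<^sup>2 * \<delta> i * m powr \<nu>" using dmn dm[OF i] by (intro mult_left_mono) auto
        finally show ?thesis .
      qed
      have av: "\<bar>nonlin (v i) x - N i\<bar> \<le> Km * (N i)\<^sup>2" if x: "x \<in> {0..1}" for x
      proof -
        have "\<bar>nonlin (v i) x - N i\<bar> \<le> (N i)\<^sup>2 * exp \<bar>N i\<bar>" unfolding v_def by (rule Mob_props(2)[OF x])
        also have "\<dots> \<le> (N i)\<^sup>2 * Km" unfolding Km_def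
        proof (intro mult_left_mono)
          have "C1 * \<delta> i \<le> C1 * 1" using dm[OF i] C1 by (intro mult_left_mono) auto
          then have "\<bar>N i\<bar> \<le> C1 * 1" using Nb by linarith
          then show "exp \<bar>N i\<bar> \<le> exp C1" by simp
        qed auto
        finally show ?thesis by (simp add: mult.commute)
      qed
      have a0: "C0 * (\<delta> i * \<delta> i powr \<nu>) \<ge> 0" "Km * (N i)\<^sup>2 \<ge> 0" using C0 dm[OF i] unfolding Km_def by auto
      have al: "\<alpha> i \<le> Ca * \<delta> i * m powr \<nu>"
      proof -
        have "\<delta> i powr \<nu> \<le> m powr \<nu>" using dm[OF i] nu by (intro powr_mono2) auto
        then have "C0 * (\<delta> i * \<delta> i powr \<nu>) \<le> C0 * (\<delta> i * m powr \<nu>)"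
          using C0 dm[OF i] by (intro mult_left_mono) auto
        moreover have "Km * (N i)\<^sup>2 \<le> Km * (C1\<^sup>2 * \<delta> i * m powr \<nu>)"
          using Nsq unfolding Km_def by (intro mult_left_mono) auto
        ultimately show ?thesis unfolding \<alpha>_def Ca_def by (simp add: algebra_simps)
      qed
      show ?thesis using cu cv au av a0 Nb al unfolding \<alpha>_def \<beta>_def by fastforce
    qed
    have sal: "(\<Sum>i=1..n. \<alpha> i) \<le> Ca * m powr \<nu> * C2"
    proof -
      have "(\<Sum>i=1..n. \<alpha> i) \<le> (\<Sum>i=1..n. Ca * m powr \<nu> * \<delta> i)"
        using per by (intro sum_mono) (simp add: algebra_simps)
      also have "\<dots> = Ca * m powr \<nu> * (\<Sum>i=1..n. \<delta> i)" by (simp add: sum_distrib_left)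
      also have "\<dots> \<le> Ca * m powr \<nu> * C2" using sd Ca0 unfolding \<delta>_def by (intro mult_left_mono) auto
      finally show ?thesis .
    qed
    have mp1: "m powr \<nu> \<le> 1" using m01 nu by (intro powr_le1) auto
    have sA: "(\<Sum>i=1..n. \<alpha> i) \<le> A0"
    proof -
      have "Ca * m powr \<nu> * C2 \<le> Ca * 1 * C2" using mp1 Ca0 C2 by (intro mult_right_mono mult_left_mono) auto
      then show ?thesis using sal unfolding A0_def by simp
    qed
    have sB: "(\<Sum>i=1..n. \<beta> i) \<le> B0"
      unfolding \<beta>_def B0_def using sd C1 unfolding \<delta>_def by (simp add: sum_distrib_left[symmetric])
    have "dC2 (comp_upto u n) (comp_upto v n) \<le> KC A0 B0 * (\<Sum>i=1..n. \<alpha> i)"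
      by (rule core'[OF _ _ _ _ _ sA sB]) (use per in auto)
    also have "\<dots> \<le> KC A0 B0 * (Ca * m powr \<nu> * C2)" using sal KC0 by (intro mult_left_mono)
    also have "\<dots> \<le> C3 * m powr \<nu>" unfolding C3_def using m01 by (simp add: algebra_simps)
    finally show "dC2 (comp_upto (\<lambda>i. zoom (a i) (b i) (f i)) n)
               (comp_upto (\<lambda>i. Mob (Nint (zoom (a i) (b i) (f i)))) n)
             \<le> C3 * (Max ((\<lambda>j. b j - a j) ` {1..n})) powr \<nu>"
      unfolding u_def v_def N_def m_def .
  qed
qed


end
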